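(* TC-Approval is Pareto optimal, while CO-Approval and UC-Approval are not Pareto optimal.
   Context: A tournament $T=(V(T),\succ)$ is a finite set of candidates with an asymmetric and complete binary relation $\succ$. Tournament solutions: the top cycle $TC(T)$ is the unique minimal nonempty $X\subseteq V(T)$ with $x\succ y$ for all $x\in X$, $y\notin X$; the Copeland set $CO(T)$ is the set of candidates of maximum outdegree; the uncovered set $UC(T)$ is the set of kings, where $a$ is a king if for every $b\neq a$, either $a\succ b$ or there is $c$ with $a\succ c\succ b$. An election $\mathcal{E}=(\mathcal{C},\mathcal{T})$ has a finite candidate set and a finite list of votes, each a tournament on $\mathcal{C}$. For a tournament solution $f$, $f$-Approval gives candidate $c$ score $|\{T\in\mathcal{T}: c\in f(T)\}|$ (with multiplicity); winners are those of highest score. A voting correspondence $\varphi$ is Pareto optimal if for every election $\mathcal{E}=(\mathcal{C},\mathcal{T})$ and every two candidates $a,b$ such that $a\succ b$ in every vote of $\mathcal{T}$, $a\notin\varphi(\mathcal{E})$ implies $b\notin\varphi(\mathcal{E})$. *)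

theory Defs
  imports Main
begin

text \<open>A tournament on a candidate set C is a relation r (r x y meaning x beats y)
  that is asymmetric and complete on C. Only its values on C matter.\<close>
definition tournament :: "'a set \<Rightarrow> ('a \<Rightarrow> 'a \<Rightarrow> bool) \<Rightarrow> bool" where
  "tournament C r \<longleftrightarrow>
     (\<forall>x\<in>C. \<forall>y\<in>C. r x y \<longrightarrow> \<not> r y x) \<and>
     (\<forall>x\<in>C. \<forall>y\<in>C. x \<noteq> y \<longrightarrow> r x y \<or> r y x)"

type_synonym 'a tsol = "'a set \<Rightarrow> ('a \<Rightarrow> 'a \<Rightarrow> bool) \<Rightarrow> 'a set"

definition dominant :: "'a set \<Rightarrow> ('a \<Rightarrow> 'a \<Rightarrow> bool) \<Rightarrow> 'a set \<Rightarrow> bool" where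
  "dominant C r X \<longleftrightarrow> X \<subseteq> C \<and> X \<noteq> {} \<and> (\<forall>x\<in>X. \<forall>y\<in>C - X. r x y)"

definition top_cycle :: "'a tsol" where
  "top_cycle C r = (THE X. dominant C r X \<and> (\<forall>Y. dominant C r Y \<longrightarrow> \<not> Y \<subset> X))"

definition outdeg :: "'a set \<Rightarrow> ('a \<Rightarrow> 'a \<Rightarrow> bool) \<Rightarrow> 'a \<Rightarrow> nat" where
  "outdeg C r x = card {y\<in>C. r x y}"

definition copeland :: "'a tsol" where
  "copeland C r = {x\<in>C. \<forall>y\<in>C. outdeg C r y \<le> outdeg C r x}"

text \<open>Uncovered set: the set of kings.\<close>
definition uncovered :: "'a tsol" where
  "uncovered C r = {a\<in>C. \<forall>b\<in>C. b \<noteq> a \<longrightarrow> r a b \<or> (\<exists>c\<in>C. r a c \<and> r c b)}"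

definition election :: "'a set \<Rightarrow> ('a \<Rightarrow> 'a \<Rightarrow> bool) list \<Rightarrow> bool" where
  "election C vs \<longleftrightarrow> finite C \<and> (\<forall>T\<in>set vs. tournament C T)"

definition approval_score :: "'a tsol \<Rightarrow> 'a set \<Rightarrow> ('a \<Rightarrow> 'a \<Rightarrow> bool) list \<Rightarrow> 'a \<Rightarrow> nat" where
  "approval_score f C vs c = length (filter (\<lambda>T. c \<in> f C T) vs)"

definition approval :: "'a tsol \<Rightarrow> 'a set \<Rightarrow> ('a \<Rightarrow> 'a \<Rightarrow> bool) list \<Rightarrow> 'a set" where
  "approval f C vs = {c\<in>C. \<forall>d\<in>C. approval_score f C vs d \<le> approval_score f C vs c}"

definition pareto_optimal :: "('a set \<Rightarrow> ('a \<Rightarrow> 'a \<Rightarrow> bool) list \<Rightarrow> 'a set) \<Rightarrow> bool" where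
  "pareto_optimal \<phi> \<longleftrightarrow>
     (\<forall>C vs. election C vs \<longrightarrow>
        (\<forall>a\<in>C. \<forall>b\<in>C. (\<forall>T\<in>set vs. T a b) \<longrightarrow> a \<notin> \<phi> C vs \<longrightarrow> b \<notin> \<phi> C vs))"

end

theory Submission
  imports Defs
begin

lemma dominant_chain:
  assumes "tournament C r" "dominant C r X" "dominant C r Y"
  shows "X \<subseteq> Y \<or> Y \<subseteq> X"
proof (rule ccontr)
  assume "\<not> (X \<subseteq> Y \<or> Y \<subseteq> X)"
  then obtain x y where "x \<in> X" "x \<notin> Y" "y \<in> Y" "y \<notin> X" by blast
  with assms show False unfolding dominant_def tournament_def by blast
qed

lemma top_cycle_dominant:
  assumes "finite C" "C \<noteq> {}" "tournament C r"
  shows "dominant C r (top_cycle C r)"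
proof -
  let ?D = "{X. dominant C r X}"
  have "C \<in> ?D" using assms unfolding dominant_def by auto
  have "?D \<subseteq> Pow C" by (auto simp: dominant_def)
  hence fin: "finite ?D" using assms(1) finite_subset by blast
  obtain X where X: "X \<in> ?D" "\<forall>Y\<in>?D. \<not> Y \<subset> X"
  proof -
    obtain m where m: "m \<in> ?D" "\<forall>b\<in>?D. b \<le> m \<longrightarrow> m = b"
      using finite_has_minimal2[OF fin \<open>C \<in> ?D\<close>] by blast
    show ?thesis using that[of m] m by blast
  qed
  have P: "dominant C r X \<and> (\<forall>Y. dominant C r Y \<longrightarrow> \<not> Y \<subset> X)" using X by auto
  have "top_cycle C r = X"
    unfolding top_cycle_def
  proof (rule the_equality)
    show "dominant C r X \<and> (\<forall>Y. dominant C r Y \<longrightarrow> \<not> Y \<subset> X)" by (rule P)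
    fix Z assume Z: "dominant C r Z \<and> (\<forall>Y. dominant C r Y \<longrightarrow> \<not> Y \<subset> Z)"
    then show "Z = X" using P dominant_chain[OF assms(3), of X Z] by blast
  qed
  with P show ?thesis by simp
qed

lemma tc_pareto: "pareto_optimal (approval (top_cycle :: 'a tsol))"
  unfolding pareto_optimal_def
proof (intro allI impI ballI)
  fix C :: "'a set" and vs a b
  assume el: "election C vs" and a: "a \<in> C" and b: "b \<in> C" and ab: "\<forall>T\<in>set vs. T a b"
    and na: "a \<notin> approval top_cycle C vs"
  have fin: "finite C" and tour: "\<forall>T\<in>set vs. tournament C T" using el by (auto simp: election_def)
  have imp: "\<forall>T\<in>set vs. b \<in> top_cycle C T \<longrightarrow> a \<in> top_cycle C T"
  proof (intro ballI impI, rule ccontr)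
    fix T assume T: "T \<in> set vs" and "b \<in> top_cycle C T" "a \<notin> top_cycle C T"
    moreover have dom: "dominant C T (top_cycle C T)" using top_cycle_dominant fin a tour T by blast
    ultimately have ac: "a \<in> C - top_cycle C T" using a by simp
    have "\<forall>x\<in>top_cycle C T. \<forall>y\<in>C - top_cycle C T. T x y" using dom unfolding dominant_def by simp
    hence "T b a" using ac \<open>b \<in> top_cycle C T\<close> by simp
    moreover have "T a b" using bspec[OF ab T] .
    moreover have "\<forall>x\<in>C. \<forall>y\<in>C. T x y \<longrightarrow> \<not> T y x" using bspec[OF tour T] unfolding tournament_def by (rule conjunct1)
    ultimately show False using a b by simp
  qed
  have le: "approval_score top_cycle C vs b \<le> approval_score top_cycle C vs a"
    unfolding approval_score_def using imp
  proof (induction vs)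
    case Nil then show ?case by simp
  next
    case (Cons T vs) then show ?case by auto
  qed
  from na a obtain d where "d \<in> C" "approval_score top_cycle C vs d > approval_score top_cycle C vs a"
    unfolding approval_def by force
  with le show "b \<notin> approval top_cycle C vs" unfolding approval_def by force
qed

definition Tco :: "nat \<Rightarrow> nat \<Rightarrow> bool" where
  "Tco x y \<longleftrightarrow> (x,y) \<in> {(0,1),(1,2),(1,3),(2,0),(3,0),(2,3)}"

definition Tuc :: "nat \<Rightarrow> nat \<Rightarrow> bool" where
  "Tuc x y \<longleftrightarrow> (x,y) \<in> {(0,1),(2,0),(2,1),(1,3),(3,2),(3,0)}"

lemma tour_co: "tournament {0,1,2,3} Tco" by (auto simp: tournament_def Tco_def)
lemma tour_uc: "tournament {0,1,2,3} Tuc" by (auto simp: tournament_def Tuc_def)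

lemma outdegs: "outdeg {0,1,2,3} Tco 0 = 1" "outdeg {0,1,2,3} Tco 1 = 2"
  "outdeg {0,1,2,3} Tco 2 = 2" "outdeg {0,1,2,3} Tco 3 = 1"
proof -
  have "{y\<in>{0,1,2,3}. Tco 0 y} = {1}" by (auto simp: Tco_def)
  thus "outdeg {0,1,2,3} Tco 0 = 1" by (simp add: outdeg_def)
  have "{y\<in>{0,1,2,3}. Tco 1 y} = {2,3}" by (auto simp: Tco_def)
  thus "outdeg {0,1,2,3} Tco 1 = 2" by (simp add: outdeg_def)
  have "{y\<in>{0,1,2,3}. Tco 2 y} = {0,3}" by (auto simp: Tco_def)
  thus "outdeg {0,1,2,3} Tco 2 = 2" by (simp add: outdeg_def)
  have "{y\<in>{0,1,2,3}. Tco 3 y} = {0}" by (auto simp: Tco_def)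
  thus "outdeg {0,1,2,3} Tco 3 = 1" by (simp add: outdeg_def)
qed

lemma co_set: "copeland {0,1,2,3} Tco = {1,2}"
  unfolding copeland_def using outdegs by auto

lemma uc_set: "uncovered {0,1,2,3} Tuc = {1,2,3}"
  unfolding uncovered_def Tuc_def by auto

lemma co_not: "\<not> pareto_optimal (approval (copeland :: nat tsol))"
proof
  assume po: "pareto_optimal (approval (copeland :: nat tsol))"
  have el: "election {0,1,2,3} [Tco]" using tour_co by (simp add: election_def)
  have ab: "\<forall>T\<in>set [Tco]. T 0 1" by (simp add: Tco_def)
  have "0 \<notin> approval copeland {0,1,2,3} [Tco] \<longrightarrow> 1 \<notin> approval copeland {0,1,2,3} [Tco]"
    using po el ab unfolding pareto_optimal_def by blast
  moreover have "0 \<notin> approval copeland {0,1,2,3} [Tco]"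
    unfolding approval_def approval_score_def by (auto simp: co_set[simplified])
  moreover have "1 \<in> approval copeland {0,1,2,3} [Tco]"
    unfolding approval_def approval_score_def by (auto simp: co_set[simplified])
  ultimately show False by blast
qed

lemma uc_not: "\<not> pareto_optimal (approval (uncovered :: nat tsol))"
proof
  assume po: "pareto_optimal (approval (uncovered :: nat tsol))"
  have el: "election {0,1,2,3} [Tuc]" using tour_uc by (simp add: election_def)
  have ab: "\<forall>T\<in>set [Tuc]. T 0 1" by (simp add: Tuc_def)
  have "0 \<notin> approval uncovered {0,1,2,3} [Tuc] \<longrightarrow> 1 \<notin> approval uncovered {0,1,2,3} [Tuc]"
    using po el ab unfolding pareto_optimal_def by blast
  moreover have "0 \<notin> approval uncovered {0,1,2,3} [Tuc]"
    unfolding approval_def approval_score_def by (auto simp: uc_set[simplified])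
  moreover have "1 \<in> approval uncovered {0,1,2,3} [Tuc]"
    unfolding approval_def approval_score_def by (auto simp: uc_set[simplified])
  ultimately show False by blast
qed

theorem theorem4:
  shows "pareto_optimal (approval (top_cycle :: 'a tsol))
       \<and> \<not> pareto_optimal (approval (copeland :: nat tsol))
       \<and> \<not> pareto_optimal (approval (uncovered :: nat tsol))"
  using tc_pareto co_not uc_not by blast

end
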